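(* Let $\gamma_{ab}(q)$ be the kinetic metric on an $n$-dimensional configuration space with coordinates $q^a$, let $V(q)$ be a smooth potential and $E_0$ a constant, and consider the constrained system $$\ddot q^a=-\Gamma^a_{bc}\dot q^b\dot q^c-V^{,a},\qquad \tfrac12\gamma_{ab}\dot q^a\dot q^b+V=E_0 .$$ Then each of the following three types of quantities is a (quadratic) first integral of this constrained system: Integral 1. For an integer $\ell\ge 0$, $$I_{(\ell)1}=\Big(-\sum_{k=1}^{\ell}\frac{t^{2k}}{2k}L_{(2k-1)(a;b)}+C_{(0)ab}\Big)\dot q^a\dot q^b+\sum_{k=1}^{\ell}t^{2k-1}L_{(2k-1)a}\dot q^a+\sum_{k=1}^{\ell}\frac{t^{2k}}{2k}L_{(2k-1)a}V^{,a}+G(q),$$ where $C_{(0)ab}(q)$ is a second order CKT of $\gamma_{ab}$ with associated vector $X_{(0)a}(q)$, the $L_{(2k-1)a}(q)$ ($k=1,\dots,\ell$) are vector fields such that each $L_{(2k-1)(a;b)}$ is a second order CKT with associated vector $Y_{(2k-1)a}(q)$, and $$(L_{(2\ell-1)b}V^{,b})_{,a}=-2L_{(2\ell-1)(a;b)}V^{,b}-2(V-E_0)Y_{(2\ell-1)a},$$ $$(L_{(2k-1)b}V^{,b})_{,a}=-2L_{(2k-1)(a;b)}V^{,b}-2k(2k+1)L_{(2k+1)a}-2(V-E_0)Y_{(2k-1)a},\quad k=1,\dots,\ell-1,$$ $$G_{,a}=2C_{(0)ab}V^{,b}+2(V-E_0)X_{(0)a}-L_{(1)a},$$ where the term $L_{(1)a}$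 in the last equation is present only when $\ell>0$ (for $\ell=0$ it is absent, and the first two families of conditions are void). Integral 2. For an integer $\ell\ge0$, $$I_{(\ell)2}=\sum_{k=0}^{\ell}\Big(-\frac{t^{2k+1}}{2k+1}L_{(2k)(a;b)}\dot q^a\dot q^b+t^{2k}L_{(2k)a}\dot q^a+\frac{t^{2k+1}}{2k+1}L_{(2k)a}V^{,a}\Big),$$ where the $L_{(2k)a}(q)$ ($k=0,\dots,\ell$) are vector fields such that each $L_{(2k)(a;b)}$ is a second order CKT with associated vector $Y_{(2k)a}(q)$, and $$(L_{(2\ell)b}V^{,b})_{,a}=-2L_{(2\ell)(a;b)}V^{,b}-2(V-E_0)Y_{(2\ell)a},$$ $$(L_{(2k)b}V^{,b})_{,a}=-2L_{(2k)(a;b)}V^{,b}-2(k+1)(2k+1)L_{(2k+2)a}-2(V-E_0)Y_{(2k)a},\quad k=0,\dots,\ell-1.$$ Integral 3. For a constant $\lambda\neq0$, $$I_{(e)}=e^{\lambda t}\big(-L_{(a;b)}\dot q^a\dot q^b+\lambda L_a\dot q^a+L_aV^{,a}\big),$$ where $L_a(q)$ is a vector field such that $L_{(a;b)}$ is a second order CKT with associated vector $Y_a(q)$, and $$(L_bV^{,b})_{,a}=-2L_{(a;b)}V^{,b}-\lambda^2L_a-2(V-E_0)Y_a.$$ (The paper asserts that these three types are the independent quadratic first integrals of the form $K_{ab}(t,q)\dot q^a\dot q^b+K_a(t,q)\dot q^a+K(t,q)$ of the constrained system.)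
   Context: Coordinates $q^a$, $a=1,\dots,n$; $\gamma_{ab}(q)$ is a (possibly indefinite) non-degenerate metric, used to raise/lower indices; $\Gamma^a_{bc}$ are its Levi-Civita connection coefficients; a comma denotes partial derivative, a semicolon the Levi-Civita covariant derivative; dots denote $d/dt$; Einstein summation is used; round brackets denote symmetrization with weight $1/N!$, e.g. $L_{(a;b)}=\frac12(L_{a;b}+L_{b;a})$, and $V^{,a}=\gamma^{ab}V_{,b}$. A first integral of the constrained system is a function $I(t,q,\dot q)$ such that $\frac{dI}{dt}=0$ along every solution $q(t)$ of $\ddot q^a=-\Gamma^a_{bc}\dot q^b\dot q^c-V^{,a}$ which satisfies $\frac12\gamma_{ab}\dot q^a\dot q^b+V=E_0$. A symmetric tensor $U_{ab}$ is a second order conformal Killing tensor (CKT) of $\gamma_{ab}$ with associated vector $u_a$ if $U_{(ab;c)}=u_{(a}\gamma_{bc)}$; necessarily $u_a=\frac{1}{n+2}(U^b{}_{b;a}+2U^b{}_{a;b})$. If $u_a=0$ it is a Killing tensor (KT). *)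

theory Defs
  imports "HOL-Analysis.Analysis"
begin

text \<open>Coordinates q are points of real^'n (indices of type 'n). Tensor fields are
functions of the point returning their components.\<close>

definition pd :: "(real^'n \<Rightarrow> real) \<Rightarrow> 'n \<Rightarrow> real^'n \<Rightarrow> real" where
  "pd f a q = frechet_derivative f (at q) (axis a 1)"

coinductive Cinf_on :: "(real^'n::finite) set \<Rightarrow> (real^'n \<Rightarrow> real) \<Rightarrow> bool" for U where
  "(\<forall>q\<in>U. f differentiable (at q)) \<Longrightarrow> (\<forall>a. Cinf_on U (pd f a)) \<Longrightarrow> Cinf_on U f"

definition metric_on :: "(real^'n::finite) set \<Rightarrow> (real^'n \<Rightarrow> 'n \<Rightarrow> 'n \<Rightarrow> real) \<Rightarrow> bool" where
  "metric_on U g \<longleftrightarrow> (\<forall>a b. Cinf_on U (\<lambda>q. g q a b))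
     \<and> (\<forall>q\<in>U. \<forall>a b. g q a b = g q b a)
     \<and> (\<forall>q\<in>U. det (\<chi> i j. g q i j) \<noteq> 0)"

definition ginv :: "(real^'n::finite \<Rightarrow> 'n \<Rightarrow> 'n \<Rightarrow> real) \<Rightarrow> real^'n \<Rightarrow> 'n \<Rightarrow> 'n \<Rightarrow> real" where
  "ginv g q a b = matrix_inv (\<chi> i j. g q i j) $ a $ b"

text \<open>Christoffel symbols: Chr g q a b c = Gamma^a_{bc}.\<close>
definition Chr :: "(real^'n::finite \<Rightarrow> 'n \<Rightarrow> 'n \<Rightarrow> real) \<Rightarrow> real^'n \<Rightarrow> 'n \<Rightarrow> 'n \<Rightarrow> 'n \<Rightarrow> real" where
  "Chr g q a b c = (1/2) * (\<Sum>d\<in>UNIV. ginv g q a d *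
      (pd (\<lambda>p. g p d b) c q + pd (\<lambda>p. g p d c) b q - pd (\<lambda>p. g p b c) d q))"

text \<open>cov1 g L q a b = L_{a;b};  cov2 g K q a b c = K_{ab;c}.\<close>
definition cov1 :: "(real^'n::finite \<Rightarrow> 'n \<Rightarrow> 'n \<Rightarrow> real) \<Rightarrow> (real^'n \<Rightarrow> 'n \<Rightarrow> real) \<Rightarrow> real^'n \<Rightarrow> 'n \<Rightarrow> 'n \<Rightarrow> real" where
  "cov1 g L q a b = pd (\<lambda>p. L p a) b q - (\<Sum>c\<in>UNIV. Chr g q c a b * L q c)"

definition cov2 :: "(real^'n::finite \<Rightarrow> 'n \<Rightarrow> 'n \<Rightarrow> real) \<Rightarrow> (real^'n \<Rightarrow> 'n \<Rightarrow> 'n \<Rightarrow> real) \<Rightarrow> real^'n \<Rightarrow> 'n \<Rightarrow> 'n \<Rightarrow> 'n \<Rightarrow> real" where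
  "cov2 g K q a b c = pd (\<lambda>p. K p a b) c q
      - (\<Sum>d\<in>UNIV. Chr g q d a c * K q d b) - (\<Sum>d\<in>UNIV. Chr g q d b c * K q a d)"

definition symL :: "(real^'n::finite \<Rightarrow> 'n \<Rightarrow> 'n \<Rightarrow> real) \<Rightarrow> (real^'n \<Rightarrow> 'n \<Rightarrow> real) \<Rightarrow> real^'n \<Rightarrow> 'n \<Rightarrow> 'n \<Rightarrow> real" where
  "symL g L q a b = (cov1 g L q a b + cov1 g L q b a) / 2"

definition sym3 :: "(real^'n \<Rightarrow> 'n \<Rightarrow> 'n \<Rightarrow> 'n \<Rightarrow> real) \<Rightarrow> real^'n \<Rightarrow> 'n \<Rightarrow> 'n \<Rightarrow> 'n \<Rightarrow> real" where
  "sym3 T q a b c = (T q a b c + T q a c b + T q b a c + T q b c a + T q c a b + T q c b a) / 6"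

definition CKT_on :: "(real^'n::finite) set \<Rightarrow> (real^'n \<Rightarrow> 'n \<Rightarrow> 'n \<Rightarrow> real)
    \<Rightarrow> (real^'n \<Rightarrow> 'n \<Rightarrow> 'n \<Rightarrow> real) \<Rightarrow> (real^'n \<Rightarrow> 'n \<Rightarrow> real) \<Rightarrow> bool" where
  "CKT_on U g K u \<longleftrightarrow> (\<forall>q\<in>U. \<forall>a b. K q a b = K q b a)
     \<and> (\<forall>q\<in>U. \<forall>a b c. sym3 (cov2 g K) q a b c = sym3 (\<lambda>p a b c. u p a * g p b c) q a b c)"

definition Vup :: "(real^'n::finite \<Rightarrow> 'n \<Rightarrow> 'n \<Rightarrow> real) \<Rightarrow> (real^'n \<Rightarrow> real) \<Rightarrow> real^'n \<Rightarrow> 'n \<Rightarrow> real" where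
  "Vup g V q a = (\<Sum>b\<in>UNIV. ginv g q a b * pd V b q)"

definition constrained_solution :: "(real^'n::finite) set \<Rightarrow> (real^'n \<Rightarrow> 'n \<Rightarrow> 'n \<Rightarrow> real)
    \<Rightarrow> (real^'n \<Rightarrow> real) \<Rightarrow> real \<Rightarrow> real set
    \<Rightarrow> (real \<Rightarrow> real^'n) \<Rightarrow> (real \<Rightarrow> real^'n) \<Rightarrow> (real \<Rightarrow> real^'n) \<Rightarrow> bool" where
  "constrained_solution U g V E0 T q q' q'' \<longleftrightarrow>
     (\<forall>t\<in>T. q t \<in> U
        \<and> (q has_vector_derivative q' t) (at t)
        \<and> (q' has_vector_derivative q'' t) (at t)
        \<and> (\<forall>a. q'' t $ a = - (\<Sum>b\<in>UNIV. \<Sum>c\<in>UNIV. Chr g (q t) a b c * q' t $ b * q' t $ c)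
                             - Vup g V (q t) a)
        \<and> (1/2) * (\<Sum>a\<in>UNIV. \<Sum>b\<in>UNIV. g (q t) a b * q' t $ a * q' t $ b) + V (q t) = E0)"

definition first_integral :: "(real^'n::finite) set \<Rightarrow> (real^'n \<Rightarrow> 'n \<Rightarrow> 'n \<Rightarrow> real)
    \<Rightarrow> (real^'n \<Rightarrow> real) \<Rightarrow> real \<Rightarrow> (real \<Rightarrow> real^'n \<Rightarrow> real^'n \<Rightarrow> real) \<Rightarrow> bool" where
  "first_integral U g V E0 I \<longleftrightarrow>
     (\<forall>T q q' q''. open T \<longrightarrow> constrained_solution U g V E0 T q q' q'' \<longrightarrow>
        (\<forall>t\<in>T. ((\<lambda>s. I s (q s) (q' s)) has_real_derivative 0) (at t)))"

definition I1 :: "(real^'n::finite \<Rightarrow> 'n \<Rightarrow> 'n \<Rightarrow> real) \<Rightarrow> (real^'n \<Rightarrow> real) \<Rightarrow> nat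
    \<Rightarrow> (real^'n \<Rightarrow> 'n \<Rightarrow> 'n \<Rightarrow> real) \<Rightarrow> (nat \<Rightarrow> real^'n \<Rightarrow> 'n \<Rightarrow> real) \<Rightarrow> (real^'n \<Rightarrow> real)
    \<Rightarrow> real \<Rightarrow> real^'n \<Rightarrow> real^'n \<Rightarrow> real" where
  "I1 g V l C0 L G t q v =
     (\<Sum>a\<in>UNIV. \<Sum>b\<in>UNIV.
        (- (\<Sum>k=1..l. t ^ (2*k) / real (2*k) * symL g (L (2*k-1)) q a b) + C0 q a b) * v $ a * v $ b)
     + (\<Sum>a\<in>UNIV. (\<Sum>k=1..l. t ^ (2*k-1) * L (2*k-1) q a) * v $ a)
     + (\<Sum>k=1..l. t ^ (2*k) / real (2*k) * (\<Sum>a\<in>UNIV. L (2*k-1) q a * Vup g V q a))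
     + G q"

definition I2 :: "(real^'n::finite \<Rightarrow> 'n \<Rightarrow> 'n \<Rightarrow> real) \<Rightarrow> (real^'n \<Rightarrow> real) \<Rightarrow> nat
    \<Rightarrow> (nat \<Rightarrow> real^'n \<Rightarrow> 'n \<Rightarrow> real) \<Rightarrow> real \<Rightarrow> real^'n \<Rightarrow> real^'n \<Rightarrow> real" where
  "I2 g V l L t q v =
     (\<Sum>k=0..l.
        - (t ^ (2*k+1) / real (2*k+1)) * (\<Sum>a\<in>UNIV. \<Sum>b\<in>UNIV. symL g (L (2*k)) q a b * v $ a * v $ b)
        + t ^ (2*k) * (\<Sum>a\<in>UNIV. L (2*k) q a * v $ a)
        + t ^ (2*k+1) / real (2*k+1) * (\<Sum>a\<in>UNIV. L (2*k) q a * Vup g V q a))"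

definition I3 :: "(real^'n::finite \<Rightarrow> 'n \<Rightarrow> 'n \<Rightarrow> real) \<Rightarrow> (real^'n \<Rightarrow> real) \<Rightarrow> real
    \<Rightarrow> (real^'n \<Rightarrow> 'n \<Rightarrow> real) \<Rightarrow> real \<Rightarrow> real^'n \<Rightarrow> real^'n \<Rightarrow> real" where
  "I3 g V lam L t q v =
     exp (lam * t) * (- (\<Sum>a\<in>UNIV. \<Sum>b\<in>UNIV. symL g L q a b * v $ a * v $ b)
        + lam * (\<Sum>a\<in>UNIV. L q a * v $ a) + (\<Sum>a\<in>UNIV. L q a * Vup g V q a))"

end

theory Submission
  imports Defs
begin


lemma pd_lin:
  fixes f :: "real^'n \<Rightarrow> real"
  assumes "f differentiable (at x)"
  shows "frechet_derivative f (at x) h = (\<Sum>a\<in>UNIV. h$a * pd f a x)"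
proof -
  have lin: "linear (frechet_derivative f (at x))"
    using assms frechet_derivative_works has_derivative_linear by blast
  have "frechet_derivative f (at x) h = frechet_derivative f (at x) (\<Sum>a\<in>UNIV. h$a *\<^sub>R axis a 1)"
    using basis_expansion[of h] by (simp add: scalar_mult_eq_scaleR)
  also have "\<dots> = (\<Sum>a\<in>UNIV. h$a * pd f a x)"
    using lin by (simp add: linear_sum linear_scale pd_def)
  finally show ?thesis .
qed

lemma chain_pd:
  fixes f :: "real^'n \<Rightarrow> real"
  assumes "f differentiable (at (q t))" "(q has_vector_derivative v) (at t)"
  shows "((\<lambda>s. f (q s)) has_real_derivative (\<Sum>a\<in>UNIV. v$a * pd f a (q t))) (at t)"
proof -
  have f: "(f has_derivative frechet_derivative f (at (q t))) (at (q t))"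
    using assms(1) frechet_derivative_works by blast
  have q: "(q has_derivative (\<lambda>h. h *\<^sub>R v)) (at t)"
    using assms(2) has_vector_derivative_def by blast
  have "((\<lambda>s. f (q s)) has_derivative (\<lambda>h. frechet_derivative f (at (q t)) (h *\<^sub>R v))) (at t)"
    using diff_chain_at[OF q f] by (simp add: o_def)
  moreover have "\<And>h. frechet_derivative f (at (q t)) (h *\<^sub>R v) = h * (\<Sum>a\<in>UNIV. v$a * pd f a (q t))"
    using pd_lin[OF assms(1)] by (simp add: sum_distrib_left mult.assoc)
  ultimately have "((\<lambda>s. f (q s)) has_derivative (\<lambda>h. h * (\<Sum>a\<in>UNIV. v$a * pd f a (q t)))) (at t)"
    by simp
  moreover have "(\<lambda>h. h * (\<Sum>a\<in>UNIV. v$a * pd f a (q t))) = (*) (\<Sum>a\<in>UNIV. v$a * pd f a (q t))"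
    by (auto simp: fun_eq_iff)
  ultimately show ?thesis
    by (simp add: has_field_derivative_def)
qed

lemma comp_deriv:
  assumes "(q' has_vector_derivative w) (at t)"
  shows "((\<lambda>s. q' s $ a) has_real_derivative (w $ a)) (at t)"
proof -
  have "((\<lambda>s. q' s $ a) has_derivative (\<lambda>h. (h *\<^sub>R w) $ a)) (at t)"
    using bounded_linear.has_derivative[OF bounded_linear_vec_nth, of q' "\<lambda>h. h *\<^sub>R w"] assms
    unfolding has_vector_derivative_def by blast
  moreover have "(\<lambda>h. (h *\<^sub>R w) $ a) = (*) (w $ a)"
    by (auto simp: fun_eq_iff)
  ultimately show ?thesis by (simp add: has_field_derivative_def)
qed



lemma Cinf_diff: "Cinf_on U f \<Longrightarrow> x \<in> U \<Longrightarrow> f differentiable (at x)"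
  by (erule Cinf_on.cases) blast

lemma Cinf_pd: "Cinf_on U f \<Longrightarrow> Cinf_on U (pd f a)"
  by (erule Cinf_on.cases) blast

lemma differentiable_prod_at:
  fixes f :: "'i \<Rightarrow> 'a::real_normed_vector \<Rightarrow> real"
  assumes "\<And>i. i \<in> I \<Longrightarrow> f i differentiable (at x)"
  shows "(\<lambda>x. \<Prod>i\<in>I. f i x) differentiable (at x)"
proof -
  from assms obtain f' where "\<And>i. i \<in> I \<Longrightarrow> (f i has_derivative f' i) (at x)"
    unfolding differentiable_def by metis
  then show ?thesis
    using has_derivative_prod unfolding differentiable_def by blast
qed

lemma det_differentiable:
  fixes M :: "real^'m \<Rightarrow> real^'n^'n"
  assumes "\<And>i j. (\<lambda>p. M p $ i $ j) differentiable (at x)"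
  shows "(\<lambda>p. det (M p)) differentiable (at x)"
  unfolding det_def
  by (intro differentiable_sum differentiable_mult differentiable_const differentiable_prod_at
      ballI assms finite_permutations finite)

lemma if_diff: "(c \<Longrightarrow> f differentiable F) \<Longrightarrow> (\<not>c \<Longrightarrow> g differentiable F) \<Longrightarrow> (\<lambda>x. if c then f x else g x) differentiable F"
  by (cases c) auto

lemma ax: "axis b (1::real) $ i = (if i = b then 1 else 0)" by (simp add: axis_def)

lemma ginv_cramer:
  fixes A :: "real^'n^'n"
  assumes "det A \<noteq> 0"
  shows "matrix_inv A $ a $ b = det (\<chi> i j. if j = a then (if i = b then 1 else 0) else A$i$j) / det A"
proof -
  have inv: "invertible A" using assms invertible_det_nz by blast
  then have "\<exists>A'. A ** A' = mat 1 \<and> A' ** A = mat 1" unfolding invertible_def .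
  from someI_ex[OF this] have AB: "A ** matrix_inv A = mat 1"
    unfolding matrix_inv_def by blast
  define x where "x = (\<chi> k. matrix_inv A $ k $ b)"
  have "A *v x = axis b 1"
  proof -
    have "\<And>i. (A *v x) $ i = (A ** matrix_inv A) $ i $ b"
      by (simp add: x_def matrix_vector_mult_def matrix_matrix_mult_def)
    then show ?thesis using AB unfolding vec_eq_iff by (simp add: mat_def ax)
  qed
  then have "x = (\<chi> k. det(\<chi> i j. if j=k then (axis b 1)$i else A$i$j) / det A)"
    using cramer[OF assms] by blast
  then have "x $ a = det(\<chi> i j. if j=a then (axis b 1)$i else A$i$j) / det A" by simp
  moreover have "(\<chi> i j. if j=a then (axis b 1)$i else A$i$j) = (\<chi> i j. if j = a then (if i = b then 1 else 0) else A$i$j)"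
    by (intro arg_cong[where f=vec_lambda] ext) (simp only: ax)
  moreover have "matrix_inv A $ a $ b = x $ a" by (simp add: x_def)
  ultimately show ?thesis by (simp only:)
qed

lemma ginv_differentiable:
  fixes g :: "real^'n::finite \<Rightarrow> 'n \<Rightarrow> 'n \<Rightarrow> real"
  assumes "open U" "metric_on U g" "x \<in> U"
  shows "(\<lambda>p. ginv g p a b) differentiable (at x)"
proof -
  have gd: "\<And>i j. (\<lambda>p. g p i j) differentiable (at x)"
    using assms Cinf_diff unfolding metric_on_def by blast
  have dn: "\<And>p. p \<in> U \<Longrightarrow> det (\<chi> i j. g p i j) \<noteq> 0" using assms unfolding metric_on_def by blast
  define F where "F = (\<lambda>p. det (\<chi> i j. if j = a then (if i = b then 1 else 0) else g p i j) / det (\<chi> i j. g p i j))"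
  have "F differentiable (at x)"
    unfolding F_def
    by (intro differentiable_divide det_differentiable dn[OF assms(3)])
       (auto simp: gd intro!: if_diff differentiable_const)
  then obtain F' where F': "(F has_derivative F') (at x)" unfolding differentiable_def by blast
  have FE: "\<And>p. p \<in> U \<Longrightarrow> F p = ginv g p a b"
  proof -
    fix p assume p: "p \<in> U"
    have "(\<chi> i j. if j = a then (if i = b then 1 else 0) else (\<chi> i j. g p i j)$i$j) = (\<chi> i j. if j = a then (if i = b then 1 else 0) else g p i j)"
      by (intro arg_cong[where f=vec_lambda] ext) simp
    then show "F p = ginv g p a b"
      unfolding F_def ginv_def ginv_cramer[OF dn[OF p], of a b] by (simp only:)
  qed
  have "((\<lambda>p. ginv g p a b) has_derivative F') (at x)"
    by (rule has_derivative_transform_within_open[OF F' assms(1,3) FE])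
  then show ?thesis unfolding differentiable_def by blast
qed



lemma sw3: "(\<Sum>b\<in>(UNIV::'n::finite set). \<Sum>c\<in>(UNIV::'n set). \<Sum>d\<in>(UNIV::'n set). f b c d) = (\<Sum>d\<in>UNIV. \<Sum>b\<in>UNIV. \<Sum>c\<in>UNIV. (f b c d :: real))"
proof -
  have "(\<Sum>b\<in>(UNIV::'n set). \<Sum>c\<in>(UNIV::'n set). \<Sum>d\<in>(UNIV::'n set). f b c d) = (\<Sum>b\<in>UNIV. \<Sum>d\<in>UNIV. \<Sum>c\<in>UNIV. f b c d)"
    by (rule sum.cong[OF refl], rule sum.swap)
  also have "\<dots> = (\<Sum>d\<in>UNIV. \<Sum>b\<in>UNIV. \<Sum>c\<in>UNIV. f b c d)" by (rule sum.swap)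
  finally show ?thesis .
qed

lemma e2:
  fixes K :: "'n::finite \<Rightarrow> 'n \<Rightarrow> real" and \<Gamma> :: "'n \<Rightarrow> 'n \<Rightarrow> 'n \<Rightarrow> real"
  assumes w: "\<And>a. w a = -(\<Sum>b\<in>UNIV. \<Sum>c\<in>UNIV. \<Gamma> a b c * v b * v c) - Vu a"
  shows "(\<Sum>a\<in>UNIV. \<Sum>b\<in>UNIV. K a b * v a * w b) = -(\<Sum>a\<in>UNIV. \<Sum>b\<in>UNIV. \<Sum>c\<in>UNIV. (\<Sum>d\<in>UNIV. \<Gamma> d b c * K a d) * v a * v b * v c) - (\<Sum>a\<in>UNIV. \<Sum>b\<in>UNIV. K a b * v a * Vu b)"
proof -
  have "\<And>a. (\<Sum>b\<in>UNIV. \<Sum>c\<in>UNIV. (\<Sum>d\<in>UNIV. \<Gamma> d b c * K a d) * v a * v b * v c)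
     = (\<Sum>b\<in>UNIV. \<Sum>c\<in>UNIV. \<Sum>d\<in>UNIV. \<Gamma> d b c * K a d * v a * v b * v c)"
    by (simp add: sum_distrib_right)
  also have "\<And>a. (\<Sum>b\<in>UNIV. \<Sum>c\<in>UNIV. \<Sum>d\<in>UNIV. \<Gamma> d b c * K a d * v a * v b * v c)
     = (\<Sum>d\<in>UNIV. \<Sum>b\<in>UNIV. \<Sum>c\<in>UNIV. \<Gamma> d b c * K a d * v a * v b * v c)"
    by (rule sw3)
  also have "\<And>a. (\<Sum>d\<in>UNIV. \<Sum>b\<in>UNIV. \<Sum>c\<in>UNIV. \<Gamma> d b c * K a d * v a * v b * v c)
     = (\<Sum>d\<in>UNIV. K a d * v a * (\<Sum>b\<in>UNIV. \<Sum>c\<in>UNIV. \<Gamma> d b c * v b * v c))"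
    by (simp add: sum_distrib_left mult_ac)
  finally have X: "\<And>a. (\<Sum>b\<in>UNIV. \<Sum>c\<in>UNIV. (\<Sum>d\<in>UNIV. \<Gamma> d b c * K a d) * v a * v b * v c)
     = (\<Sum>d\<in>UNIV. K a d * v a * (\<Sum>b\<in>UNIV. \<Sum>c\<in>UNIV. \<Gamma> d b c * v b * v c))" .
  have Y: "(\<Sum>a\<in>UNIV. \<Sum>b\<in>UNIV. K a b * v a * w b) = -(\<Sum>a\<in>UNIV. \<Sum>d\<in>UNIV. K a d * v a * (\<Sum>b\<in>UNIV. \<Sum>c\<in>UNIV. \<Gamma> d b c * v b * v c)) - (\<Sum>a\<in>UNIV. \<Sum>b\<in>UNIV. K a b * v a * Vu b)"
    by (simp add: w algebra_simps sum.distrib sum_subtractf sum_negf)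
  show ?thesis unfolding Y X[symmetric] ..
qed

lemma e3:
  fixes K :: "'n::finite \<Rightarrow> 'n \<Rightarrow> real" and \<Gamma> :: "'n \<Rightarrow> 'n \<Rightarrow> 'n \<Rightarrow> real"
  assumes w: "\<And>a. w a = -(\<Sum>b\<in>UNIV. \<Sum>c\<in>UNIV. \<Gamma> a b c * v b * v c) - Vu a"
    and symK: "\<And>a b. K a b = K b a"
  shows "(\<Sum>a\<in>UNIV. \<Sum>b\<in>UNIV. K a b * w a * v b) = -(\<Sum>a\<in>UNIV. \<Sum>b\<in>UNIV. \<Sum>c\<in>UNIV. (\<Sum>d\<in>UNIV. \<Gamma> d a c * K d b) * v a * v b * v c) - (\<Sum>a\<in>UNIV. \<Sum>b\<in>UNIV. K a b * v a * Vu b)"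
proof -
  have A: "(\<Sum>a\<in>UNIV. \<Sum>b\<in>UNIV. K a b * w a * v b) = (\<Sum>a\<in>UNIV. \<Sum>b\<in>UNIV. K a b * v a * w b)"
    by (subst sum.swap) (simp add: symK mult_ac)
  have B: "(\<Sum>a\<in>UNIV. \<Sum>b\<in>UNIV. \<Sum>c\<in>UNIV. (\<Sum>d\<in>UNIV. \<Gamma> d a c * K d b) * v a * v b * v c)
      = (\<Sum>a\<in>UNIV. \<Sum>b\<in>UNIV. \<Sum>c\<in>UNIV. (\<Sum>d\<in>UNIV. \<Gamma> d b c * K a d) * v a * v b * v c)"
    by (subst sum.swap) (simp add: symK mult_ac)
  have C: "(\<Sum>a\<in>UNIV. \<Sum>b\<in>UNIV. K a b * v a * Vu b) = (\<Sum>a\<in>UNIV. \<Sum>b\<in>UNIV. K a b * v a * Vu b)" ..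
  show ?thesis unfolding A B using e2[OF w] by simp
qed

lemma quad_alg:
  fixes K :: "'n::finite \<Rightarrow> 'n \<Rightarrow> real" and \<Gamma> :: "'n \<Rightarrow> 'n \<Rightarrow> 'n \<Rightarrow> real"
  assumes w: "\<And>a. w a = -(\<Sum>b\<in>UNIV. \<Sum>c\<in>UNIV. \<Gamma> a b c * v b * v c) - Vu a"
    and symK: "\<And>a b. K a b = K b a"
  shows "(\<Sum>a\<in>UNIV. \<Sum>b\<in>UNIV. (\<Sum>c\<in>UNIV. v c * P c a b) * v a * v b + K a b * w a * v b + K a b * v a * w b)
    = (\<Sum>a\<in>UNIV. \<Sum>b\<in>UNIV. \<Sum>c\<in>UNIV. (P c a b - (\<Sum>d\<in>UNIV. \<Gamma> d a c * K d b) - (\<Sum>d\<in>UNIV. \<Gamma> d b c * K a d)) * v a * v b * v c)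
      - 2 * (\<Sum>a\<in>UNIV. \<Sum>b\<in>UNIV. K a b * v a * Vu b)"
proof -
  have e1: "(\<Sum>a\<in>UNIV. \<Sum>b\<in>UNIV. (\<Sum>c\<in>UNIV. v c * P c a b) * v a * v b) = (\<Sum>a\<in>UNIV. \<Sum>b\<in>UNIV. \<Sum>c\<in>UNIV. P c a b * v a * v b * v c)"
    by (simp add: sum_distrib_right sum_distrib_left mult_ac)
  have R: "(\<Sum>a\<in>UNIV. \<Sum>b\<in>UNIV. \<Sum>c\<in>UNIV. (P c a b - (\<Sum>d\<in>UNIV. \<Gamma> d a c * K d b) - (\<Sum>d\<in>UNIV. \<Gamma> d b c * K a d)) * v a * v b * v c)
     = (\<Sum>a\<in>UNIV. \<Sum>b\<in>UNIV. \<Sum>c\<in>UNIV. P c a b * v a * v b * v c)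
     - (\<Sum>a\<in>UNIV. \<Sum>b\<in>UNIV. \<Sum>c\<in>UNIV. (\<Sum>d\<in>UNIV. \<Gamma> d a c * K d b) * v a * v b * v c)
     - (\<Sum>a\<in>UNIV. \<Sum>b\<in>UNIV. \<Sum>c\<in>UNIV. (\<Sum>d\<in>UNIV. \<Gamma> d b c * K a d) * v a * v b * v c)"
    by (simp add: algebra_simps sum_subtractf sum.distrib)
  show ?thesis
    unfolding R sum.distrib e1 e2[OF w] e3[OF w symK] by simp
qed



lemma sw_bc: "(\<Sum>a\<in>(UNIV::'n::finite set). \<Sum>b\<in>(UNIV::'n set). \<Sum>c\<in>(UNIV::'n set). (F a b c::real)) = (\<Sum>a\<in>UNIV. \<Sum>b\<in>UNIV. \<Sum>c\<in>UNIV. F a c b)"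
  by (rule sum.cong[OF refl], rule sum.swap)

lemma sw_ab: "(\<Sum>a\<in>(UNIV::'n::finite set). \<Sum>b\<in>(UNIV::'n set). \<Sum>c\<in>(UNIV::'n set). (F a b c::real)) = (\<Sum>a\<in>UNIV. \<Sum>b\<in>UNIV. \<Sum>c\<in>UNIV. F b a c)"
  by (rule sum.swap)

lemma sym3_sum:
  fixes T :: "real^'n::finite \<Rightarrow> 'n \<Rightarrow> 'n \<Rightarrow> 'n \<Rightarrow> real"
  shows "(\<Sum>a\<in>UNIV. \<Sum>b\<in>UNIV. \<Sum>c\<in>UNIV. sym3 T q a b c * v a * v b * v c)
       = (\<Sum>a\<in>UNIV. \<Sum>b\<in>UNIV. \<Sum>c\<in>UNIV. T q a b c * v a * v b * v c)"
proof -
  define F where "F = (\<lambda>a b c. T q a b c * v a * v b * v c)"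
  let ?S = "\<lambda>G. (\<Sum>a\<in>UNIV. \<Sum>b\<in>UNIV. \<Sum>c\<in>(UNIV::'n set). (G a b c::real))"
  have p1: "?S (\<lambda>a b c. F a c b) = ?S F" using sw_bc[of F] by simp
  have p2: "?S (\<lambda>a b c. F b a c) = ?S F" using sw_ab[of F] by simp
  have p3: "?S (\<lambda>a b c. F b c a) = ?S F" using sw_ab[of "\<lambda>a b c. F b c a"] p1 by simp
  have p4: "?S (\<lambda>a b c. F c a b) = ?S F" using sw_bc[of "\<lambda>a b c. F c a b"] p2 by simp
  have p5: "?S (\<lambda>a b c. F c b a) = ?S F" using sw_bc[of "\<lambda>a b c. F c b a"] p3 by simp
  have pt: "\<And>a b c. sym3 T q a b c * v a * v b * v c = (F a b c + F a c b + F b a c + F b c a + F c a b + F c b a) / 6"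
    unfolding sym3_def F_def by (simp add: field_simps)
  have "?S (\<lambda>a b c. sym3 T q a b c * v a * v b * v c) = (?S F + ?S (\<lambda>a b c. F a c b) + ?S (\<lambda>a b c. F b a c) + ?S (\<lambda>a b c. F b c a) + ?S (\<lambda>a b c. F c a b) + ?S (\<lambda>a b c. F c b a)) / 6"
    unfolding pt by (simp only: sum.distrib sum_divide_distrib[symmetric])
  also have "\<dots> = ?S F" unfolding p1 p2 p3 p4 p5 by simp
  finally show ?thesis unfolding F_def .
qed

lemma sym3_ug_sum:
  fixes u :: "real^'n::finite \<Rightarrow> 'n \<Rightarrow> real" and g :: "real^'n \<Rightarrow> 'n \<Rightarrow> 'n \<Rightarrow> real"
  shows "(\<Sum>a\<in>UNIV. \<Sum>b\<in>UNIV. \<Sum>c\<in>UNIV. sym3 (\<lambda>p a b c. u p a * g p b c) q a b c * v a * v b * v c)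
       = (\<Sum>a\<in>UNIV. u q a * v a) * (\<Sum>a\<in>UNIV. \<Sum>b\<in>UNIV. g q a b * v a * v b)"
  unfolding sym3_sum sum_distrib_right unfolding sum_distrib_left by (simp add: mult_ac)



lemma quad_deriv:
  fixes g :: "real^'n::finite \<Rightarrow> 'n \<Rightarrow> 'n \<Rightarrow> real"
  assumes ckt: "CKT_on U g K u" and Kd: "\<And>a b. (\<lambda>p. K p a b) differentiable (at (q t))"
    and qU: "q t \<in> U" and dq: "(q has_vector_derivative q' t) (at t)"
    and dq': "(q' has_vector_derivative q'' t) (at t)"
    and acc: "\<forall>a. q'' t $ a = - (\<Sum>b\<in>UNIV. \<Sum>c\<in>UNIV. Chr g (q t) a b c * q' t $ b * q' t $ c) - Vup g V (q t) a"
    and en: "(1/2) * (\<Sum>a\<in>UNIV. \<Sum>b\<in>UNIV. g (q t) a b * q' t $ a * q' t $ b) + V (q t) = E0"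
  shows "((\<lambda>s. \<Sum>a\<in>UNIV. \<Sum>b\<in>UNIV. K (q s) a b * q' s $ a * q' s $ b) has_real_derivative
     (2*(E0 - V (q t)) * (\<Sum>a\<in>UNIV. u (q t) a * q' t $ a) - 2*(\<Sum>a\<in>UNIV. \<Sum>b\<in>UNIV. K (q t) a b * q' t $ a * Vup g V (q t) b))) (at t)"
proof -
  let ?v = "\<lambda>a. q' t $ a" and ?w = "\<lambda>a. q'' t $ a"
  let ?P = "\<lambda>c a b. pd (\<lambda>p. K p a b) c (q t)"
  have D: "((\<lambda>s. \<Sum>a\<in>UNIV. \<Sum>b\<in>UNIV. K (q s) a b * q' s $ a * q' s $ b) has_real_derivative
     (\<Sum>a\<in>UNIV. \<Sum>b\<in>UNIV. (\<Sum>c\<in>UNIV. ?v c * ?P c a b) * ?v a * ?v b + K (q t) a b * ?w a * ?v b + K (q t) a b * ?v a * ?w b)) (at t)"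
    apply (rule DERIV_cong)
     apply (rule DERIV_sum, rule DERIV_sum, rule DERIV_mult, rule DERIV_mult, rule chain_pd[OF Kd dq], rule comp_deriv[OF dq'], rule comp_deriv[OF dq'])
    apply (simp add: algebra_simps)
    done
  have symK: "\<And>a b. K (q t) a b = K (q t) b a" using ckt qU unfolding CKT_on_def by blast
  have alg: "(\<Sum>a\<in>UNIV. \<Sum>b\<in>UNIV. (\<Sum>c\<in>UNIV. ?v c * ?P c a b) * ?v a * ?v b + K (q t) a b * ?w a * ?v b + K (q t) a b * ?v a * ?w b)
    = (\<Sum>a\<in>UNIV. \<Sum>b\<in>UNIV. \<Sum>c\<in>UNIV. cov2 g K (q t) a b c * ?v a * ?v b * ?v c) - 2 * (\<Sum>a\<in>UNIV. \<Sum>b\<in>UNIV. K (q t) a b * ?v a * Vup g V (q t) b)"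
    unfolding cov2_def
    by (rule quad_alg[where \<Gamma>="Chr g (q t)"]) (use acc symK in auto)
  have c1: "(\<Sum>a\<in>UNIV. \<Sum>b\<in>UNIV. \<Sum>c\<in>UNIV. cov2 g K (q t) a b c * ?v a * ?v b * ?v c)
     = (\<Sum>a\<in>UNIV. \<Sum>b\<in>UNIV. \<Sum>c\<in>UNIV. sym3 (cov2 g K) (q t) a b c * ?v a * ?v b * ?v c)"
    by (rule sym3_sum[symmetric])
  also have "\<dots> = (\<Sum>a\<in>UNIV. \<Sum>b\<in>UNIV. \<Sum>c\<in>UNIV. sym3 (\<lambda>p a b c. u p a * g p b c) (q t) a b c * ?v a * ?v b * ?v c)"
    using ckt qU unfolding CKT_on_def by simp
  also have "\<dots> = (\<Sum>a\<in>UNIV. u (q t) a * ?v a) * (\<Sum>a\<in>UNIV. \<Sum>b\<in>UNIV. g (q t) a b * ?v a * ?v b)"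
    by (rule sym3_ug_sum) 
  also have "\<dots> = 2*(E0 - V (q t)) * (\<Sum>a\<in>UNIV. u (q t) a * ?v a)"
  proof -
    have "(\<Sum>a\<in>UNIV. \<Sum>b\<in>UNIV. g (q t) a b * ?v a * ?v b) = 2*(E0 - V (q t))" using en by simp
    then show ?thesis by simp
  qed
  finally show ?thesis using D alg by simp
qed

lemma lin_alg:
  fixes L :: "'n::finite \<Rightarrow> real" and \<Gamma> :: "'n \<Rightarrow> 'n \<Rightarrow> 'n \<Rightarrow> real"
  assumes w: "\<And>a. w a = -(\<Sum>b\<in>UNIV. \<Sum>c\<in>UNIV. \<Gamma> a b c * v b * v c) - Vu a"
  shows "(\<Sum>a\<in>UNIV. (\<Sum>b\<in>UNIV. v b * P b a) * v a + L a * w a)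
    = (\<Sum>a\<in>UNIV. \<Sum>b\<in>UNIV. ((P b a - (\<Sum>c\<in>UNIV. \<Gamma> c a b * L c)) + (P a b - (\<Sum>c\<in>UNIV. \<Gamma> c b a * L c))) / 2 * v a * v b)
      - (\<Sum>a\<in>UNIV. L a * Vu a)"
proof -
  have s1: "(\<Sum>a\<in>UNIV. \<Sum>b\<in>UNIV. P a b * v a * v b) = (\<Sum>a\<in>UNIV. \<Sum>b\<in>UNIV. P b a * v a * v b)"
    by (subst sum.swap) (simp add: mult_ac)
  have s2: "(\<Sum>a\<in>UNIV. \<Sum>b\<in>UNIV. (\<Sum>c\<in>UNIV. \<Gamma> c b a * L c) * v a * v b) = (\<Sum>a\<in>UNIV. \<Sum>b\<in>UNIV. (\<Sum>c\<in>UNIV. \<Gamma> c a b * L c) * v a * v b)"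
    by (subst sum.swap) (simp add: mult_ac)
  have s3: "(\<Sum>a\<in>UNIV. \<Sum>b\<in>UNIV. (\<Sum>c\<in>UNIV. \<Gamma> c a b * L c) * v a * v b) = (\<Sum>c\<in>UNIV. L c * (\<Sum>a\<in>UNIV. \<Sum>b\<in>UNIV. \<Gamma> c a b * v a * v b))"
  proof -
    have "(\<Sum>a\<in>UNIV. \<Sum>b\<in>UNIV. (\<Sum>c\<in>UNIV. \<Gamma> c a b * L c) * v a * v b) = (\<Sum>a\<in>UNIV. \<Sum>b\<in>UNIV. \<Sum>c\<in>UNIV. \<Gamma> c a b * L c * v a * v b)"
      by (simp add: sum_distrib_right)
    also have "\<dots> = (\<Sum>c\<in>UNIV. \<Sum>a\<in>UNIV. \<Sum>b\<in>UNIV. \<Gamma> c a b * L c * v a * v b)"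
      by (rule sw3)
    also have "\<dots> = (\<Sum>c\<in>UNIV. L c * (\<Sum>a\<in>UNIV. \<Sum>b\<in>UNIV. \<Gamma> c a b * v a * v b))"
      by (simp add: sum_distrib_left mult_ac)
    finally show ?thesis .
  qed
  have pt: "\<And>a b. ((P b a - (\<Sum>c\<in>UNIV. \<Gamma> c a b * L c)) + (P a b - (\<Sum>c\<in>UNIV. \<Gamma> c b a * L c))) / 2 * v a * v b
     = (1/2) * (P b a * v a * v b) - (1/2) * ((\<Sum>c\<in>UNIV. \<Gamma> c a b * L c) * v a * v b)
       + (1/2) * (P a b * v a * v b) - (1/2) * ((\<Sum>c\<in>UNIV. \<Gamma> c b a * L c) * v a * v b)"
    by (simp add: field_simps)
  have R: "(\<Sum>a\<in>UNIV. \<Sum>b\<in>UNIV. ((P b a - (\<Sum>c\<in>UNIV. \<Gamma> c a b * L c)) + (P a b - (\<Sum>c\<in>UNIV. \<Gamma> c b a * L c))) / 2 * v a * v b)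
     = (1/2) * (\<Sum>a\<in>UNIV. \<Sum>b\<in>UNIV. P b a * v a * v b) - (1/2) * (\<Sum>a\<in>UNIV. \<Sum>b\<in>UNIV. (\<Sum>c\<in>UNIV. \<Gamma> c a b * L c) * v a * v b)
       + (1/2) * (\<Sum>a\<in>UNIV. \<Sum>b\<in>UNIV. P a b * v a * v b) - (1/2) * (\<Sum>a\<in>UNIV. \<Sum>b\<in>UNIV. (\<Sum>c\<in>UNIV. \<Gamma> c b a * L c) * v a * v b)"
    unfolding pt by (simp only: sum.distrib sum_subtractf sum_distrib_left[symmetric])
  have e1: "(\<Sum>a\<in>UNIV. (\<Sum>b\<in>UNIV. v b * P b a) * v a) = (\<Sum>a\<in>UNIV. \<Sum>b\<in>UNIV. P b a * v a * v b)"
    by (simp add: sum_distrib_right sum_distrib_left mult_ac)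
  have e2: "(\<Sum>a\<in>UNIV. L a * w a) = -(\<Sum>c\<in>UNIV. L c * (\<Sum>a\<in>UNIV. \<Sum>b\<in>UNIV. \<Gamma> c a b * v a * v b)) - (\<Sum>a\<in>UNIV. L a * Vu a)"
    by (simp add: w algebra_simps sum_subtractf sum_negf sum.distrib)
  show ?thesis unfolding R s1 s2 s3 sum.distrib e1 e2 by (simp add: algebra_simps)
qed

lemma lin_deriv:
  fixes g :: "real^'n::finite \<Rightarrow> 'n \<Rightarrow> 'n \<Rightarrow> real"
  assumes Ld: "\<And>a. (\<lambda>p. L p a) differentiable (at (q t))"
    and dq: "(q has_vector_derivative q' t) (at t)"
    and dq': "(q' has_vector_derivative q'' t) (at t)"
    and acc: "\<forall>a. q'' t $ a = - (\<Sum>b\<in>UNIV. \<Sum>c\<in>UNIV. Chr g (q t) a b c * q' t $ b * q' t $ c) - Vup g V (q t) a"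
  shows "((\<lambda>s. \<Sum>a\<in>UNIV. L (q s) a * q' s $ a) has_real_derivative
     ((\<Sum>a\<in>UNIV. \<Sum>b\<in>UNIV. symL g L (q t) a b * q' t $ a * q' t $ b) - (\<Sum>a\<in>UNIV. L (q t) a * Vup g V (q t) a))) (at t)"
proof -
  let ?v = "\<lambda>a. q' t $ a" and ?w = "\<lambda>a. q'' t $ a"
  let ?P = "\<lambda>b a. pd (\<lambda>p. L p a) b (q t)"
  have D: "((\<lambda>s. \<Sum>a\<in>UNIV. L (q s) a * q' s $ a) has_real_derivative
     (\<Sum>a\<in>UNIV. (\<Sum>b\<in>UNIV. ?v b * ?P b a) * ?v a + L (q t) a * ?w a)) (at t)"
    apply (rule DERIV_cong)
     apply (rule DERIV_sum, rule DERIV_mult, rule chain_pd[OF Ld dq], rule comp_deriv[OF dq'])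
    apply (simp add: algebra_simps)
    done
  have "(\<Sum>a\<in>UNIV. (\<Sum>b\<in>UNIV. ?v b * ?P b a) * ?v a + L (q t) a * ?w a)
     = (\<Sum>a\<in>UNIV. \<Sum>b\<in>UNIV. symL g L (q t) a b * q' t $ a * q' t $ b) - (\<Sum>a\<in>UNIV. L (q t) a * Vup g V (q t) a)"
    unfolding symL_def cov1_def
    by (rule lin_alg[where \<Gamma>="Chr g (q t)"]) (use acc in auto)
  then show ?thesis using D by simp
qed

lemma scal_deriv:
  assumes fd: "f differentiable (at (q t))" and dq: "(q has_vector_derivative q' t) (at t)"
  shows "((\<lambda>s. f (q s)) has_real_derivative (\<Sum>a\<in>UNIV. pd f a (q t) * q' t $ a)) (at t)"
  using chain_pd[OF fd dq] by (simp add: mult.commute)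



lemma Chr_diff:
  assumes "open U" "metric_on U g" "x \<in> U"
  shows "(\<lambda>p. Chr g p a b c) differentiable (at x)"
proof -
  have gC: "\<And>i j. Cinf_on U (\<lambda>p. g p i j)" using assms unfolding metric_on_def by blast
  have pdd: "\<And>i j k. (\<lambda>p. pd (\<lambda>p. g p i j) k p) differentiable (at x)"
    using Cinf_diff[OF Cinf_pd[OF gC] assms(3)] by simp
  have gi: "\<And>i j. (\<lambda>p. ginv g p i j) differentiable (at x)"
    using ginv_differentiable[OF assms] .
  show ?thesis unfolding Chr_def
    by (intro differentiable_mult differentiable_const differentiable_sum finite ballI
        differentiable_add differentiable_diff pdd gi)
qed

lemma Vup_diff:
  assumes "open U" "metric_on U g" "x \<in> U" "Cinf_on U V"
  shows "(\<lambda>p. Vup g V p a) differentiable (at x)"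
proof -
  have pdd: "\<And>k. (\<lambda>p. pd V k p) differentiable (at x)"
    using Cinf_diff[OF Cinf_pd[OF assms(4)] assms(3)] by simp
  have gi: "\<And>i j. (\<lambda>p. ginv g p i j) differentiable (at x)"
    using ginv_differentiable[OF assms(1-3)] .
  show ?thesis unfolding Vup_def
    by (intro differentiable_mult differentiable_sum finite ballI pdd gi)
qed

lemma symL_diff:
  assumes "open U" "metric_on U g" "x \<in> U" "\<And>a. Cinf_on U (\<lambda>q. L q a)"
  shows "(\<lambda>p. symL g L p a b) differentiable (at x)"
proof -
  have pdd: "\<And>i k. (\<lambda>p. pd (\<lambda>q. L q i) k p) differentiable (at x)"
    using Cinf_diff[OF Cinf_pd[OF assms(4)] assms(3)] by simp
  have Ld: "\<And>i. (\<lambda>p. L p i) differentiable (at x)"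
    using Cinf_diff[OF assms(4) assms(3)] by simp
  show ?thesis unfolding symL_def cov1_def
    by (intro differentiable_divide differentiable_const differentiable_mult differentiable_sum finite ballI
        differentiable_add differentiable_diff pdd Ld Chr_diff[OF assms(1-3)]) simp
qed

lemma LV_diff:
  assumes "open U" "metric_on U g" "x \<in> U" "Cinf_on U V" "\<And>a. Cinf_on U (\<lambda>q. L q a)"
  shows "(\<lambda>p. \<Sum>b\<in>UNIV. L p b * Vup g V p b) differentiable (at x)"
proof -
  have Ld: "\<And>i. (\<lambda>p. L p i) differentiable (at x)"
    using Cinf_diff[OF assms(5) assms(3)] by simp
  show ?thesis
    by (intro differentiable_mult differentiable_sum finite ballI Ld Vup_diff[OF assms(1-4)])
qed



lemma sol_at:
  assumes "constrained_solution U g V E0 T q q' q''" "t \<in> T"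
  shows "q t \<in> U" "(q has_vector_derivative q' t) (at t)" "(q' has_vector_derivative q'' t) (at t)"
    "\<forall>a. q'' t $ a = - (\<Sum>b\<in>UNIV. \<Sum>c\<in>UNIV. Chr g (q t) a b c * q' t $ b * q' t $ c) - Vup g V (q t) a"
    "(1/2) * (\<Sum>a\<in>UNIV. \<Sum>b\<in>UNIV. g (q t) a b * q' t $ a * q' t $ b) + V (q t) = E0"
  using assms unfolding constrained_solution_def by blast+

lemma I3_ok:
  fixes g :: "real^'n::finite \<Rightarrow> 'n \<Rightarrow> 'n \<Rightarrow> real"
  assumes oU: "open U" and mg: "metric_on U g" and cV: "Cinf_on U V"
    and Lc: "\<forall>a. Cinf_on U (\<lambda>q. L q a)" and ckt: "CKT_on U g (symL g L) Y"
    and cond: "\<forall>q\<in>U. \<forall>a. pd (\<lambda>p. \<Sum>b\<in>UNIV. L p b * Vup g V p b) a q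
          = - 2 * (\<Sum>b\<in>UNIV. symL g L q a b * Vup g V q b) - lam ^ 2 * L q a - 2 * (V q - E0) * Y q a"
  shows "first_integral U g V E0 (I3 g V lam L)"
  unfolding first_integral_def
proof (intro allI impI ballI)
  fix T q q' q'' t
  assume "open T" and cs: "constrained_solution U g V E0 T q q' q''" and tT: "t \<in> T"
  note s = sol_at[OF cs tT]
  define x where "x = q t"
  have xU: "x \<in> U" using s(1) x_def by simp
  let ?v = "\<lambda>a. q' t $ a"
  let ?F = "\<lambda>p. \<Sum>b\<in>UNIV. L p b * Vup g V p b"
  have Kd: "\<And>a b. (\<lambda>p. symL g L p a b) differentiable (at (q t))"
    using symL_diff[OF oU mg s(1)] Lc by blast
  have Ld: "\<And>a. (\<lambda>p. L p a) differentiable (at (q t))"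
    using Cinf_diff[OF _ s(1)] Lc by blast
  have Fdiff: "?F differentiable (at (q t))"
    using LV_diff[OF oU mg s(1) cV] Lc by blast
  note Qd = quad_deriv[where q=q and t=t and q'=q' and q''=q'', OF ckt Kd s]
  note Lind = lin_deriv[where q=q and t=t and q'=q' and q''=q'', OF Ld s(2,3,4)]
  note Fd = scal_deriv[where q=q and t=t and q'=q', OF Fdiff s(2)]
  have Ed: "((\<lambda>s. exp (lam * s)) has_real_derivative exp (lam * t) * lam) (at t)"
    by (auto intro!: derivative_eq_intros)
  define S where "S = (\<Sum>a\<in>UNIV. \<Sum>b\<in>UNIV. symL g L x a b * ?v a * ?v b)"
  define W where "W = (\<Sum>a\<in>UNIV. \<Sum>b\<in>UNIV. symL g L x a b * ?v a * Vup g V x b)"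
  define Yv where "Yv = (\<Sum>a\<in>UNIV. Y x a * ?v a)"
  define Lv where "Lv = (\<Sum>a\<in>UNIV. L x a * ?v a)"
  define LVu where "LVu = (\<Sum>a\<in>UNIV. L x a * Vup g V x a)"
  have Fval: "(\<Sum>a\<in>UNIV. pd ?F a x * ?v a) = -2 * W - lam^2 * Lv - 2 * (V x - E0) * Yv"
  proof -
    have "(\<Sum>a\<in>UNIV. pd ?F a x * ?v a) = (\<Sum>a\<in>UNIV. (- 2 * (\<Sum>b\<in>UNIV. symL g L x a b * Vup g V x b) - lam ^ 2 * L x a - 2 * (V x - E0) * Y x a) * ?v a)"
      using cond xU by simp
    also have "\<dots> = -2 * W - lam^2 * Lv - 2 * (V x - E0) * Yv"
      unfolding W_def Lv_def Yv_def
      by (simp add: sum_distrib_left sum_distrib_right sum_subtractf algebra_simps sum.distrib)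
    finally show ?thesis .
  qed
  have fun_eq: "(\<lambda>s. I3 g V lam L s (q s) (q' s)) = (\<lambda>s. exp (lam * s) * (- (\<Sum>a\<in>UNIV. \<Sum>b\<in>UNIV. symL g L (q s) a b * q' s $ a * q' s $ b)
        + lam * (\<Sum>a\<in>UNIV. L (q s) a * q' s $ a) + ?F (q s)))"
    unfolding I3_def ..
  have D: "((\<lambda>s. I3 g V lam L s (q s) (q' s)) has_real_derivative
      exp (lam * t) * lam * (- S + lam * Lv + LVu)
      + (- (2*(E0 - V x) * Yv - 2*W) + lam * (S - LVu) + (-2 * W - lam^2 * Lv - 2 * (V x - E0) * Yv)) * exp (lam * t)) (at t)"
    unfolding fun_eq
    apply (rule DERIV_cong, rule DERIV_mult[OF Ed], rule DERIV_add, rule DERIV_add, rule DERIV_minus[OF Qd], rule DERIV_cmult[OF Lind], rule Fd)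
    unfolding Fval[unfolded x_def] by (simp add: S_def W_def Yv_def Lv_def LVu_def x_def)
  show "((\<lambda>s. I3 g V lam L s (q s) (q' s)) has_real_derivative 0) (at t)"
    by (rule DERIV_cong[OF D]) (simp add: algebra_simps power2_eq_square)
qed



lemma block_deriv:
  fixes g :: "real^'n::finite \<Rightarrow> 'n \<Rightarrow> 'n \<Rightarrow> real"
  assumes oU: "open U" and mg: "metric_on U g" and cV: "Cinf_on U V"
    and Lc: "\<forall>a. Cinf_on U (\<lambda>q. M q a)" and ckt: "CKT_on U g (symL g M) Y"
    and cond: "\<forall>q\<in>U. \<forall>a. pd (\<lambda>p. \<Sum>b\<in>UNIV. M p b * Vup g V p b) a q
          = - 2 * (\<Sum>b\<in>UNIV. symL g M q a b * Vup g V q b) - \<beta> * N q a - 2 * (V q - E0) * Y q a"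
    and cs: "constrained_solution U g V E0 T q q' q''" and tT: "t \<in> T"
    and dtau: "(\<tau> has_real_derivative \<sigma> t) (at t)"
    and dsig: "(\<sigma> has_real_derivative \<sigma>d) (at t)"
  shows "((\<lambda>s. - \<tau> s * (\<Sum>a\<in>UNIV. \<Sum>b\<in>UNIV. symL g M (q s) a b * q' s $ a * q' s $ b)
        + \<sigma> s * (\<Sum>a\<in>UNIV. M (q s) a * q' s $ a)
        + \<tau> s * (\<Sum>a\<in>UNIV. M (q s) a * Vup g V (q s) a)) has_real_derivative
        \<sigma>d * (\<Sum>a\<in>UNIV. M (q t) a * q' t $ a) - \<tau> t * \<beta> * (\<Sum>a\<in>UNIV. N (q t) a * q' t $ a)) (at t)"
proof -
  note s = sol_at[OF cs tT]
  define x where "x = q t"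
  have xU: "x \<in> U" using s(1) x_def by simp
  let ?v = "\<lambda>a. q' t $ a"
  let ?F = "\<lambda>p. \<Sum>b\<in>UNIV. M p b * Vup g V p b"
  have Kd: "\<And>a b. (\<lambda>p. symL g M p a b) differentiable (at (q t))"
    using symL_diff[OF oU mg s(1)] Lc by blast
  have Ld: "\<And>a. (\<lambda>p. M p a) differentiable (at (q t))"
    using Cinf_diff[OF _ s(1)] Lc by blast
  have Fdiff: "?F differentiable (at (q t))"
    using LV_diff[OF oU mg s(1) cV] Lc by blast
  note Qd = quad_deriv[where q=q and t=t and q'=q' and q''=q'', OF ckt Kd s]
  note Lind = lin_deriv[where q=q and t=t and q'=q' and q''=q'', OF Ld s(2,3,4)]
  note Fd = scal_deriv[where q=q and t=t and q'=q', OF Fdiff s(2)]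
  define S where "S = (\<Sum>a\<in>UNIV. \<Sum>b\<in>UNIV. symL g M x a b * ?v a * ?v b)"
  define W where "W = (\<Sum>a\<in>UNIV. \<Sum>b\<in>UNIV. symL g M x a b * ?v a * Vup g V x b)"
  define Yv where "Yv = (\<Sum>a\<in>UNIV. Y x a * ?v a)"
  define Nv where "Nv = (\<Sum>a\<in>UNIV. N x a * ?v a)"
  define Lv where "Lv = (\<Sum>a\<in>UNIV. M x a * ?v a)"
  define LVu where "LVu = (\<Sum>a\<in>UNIV. M x a * Vup g V x a)"
  have Fval: "(\<Sum>a\<in>UNIV. pd ?F a x * ?v a) = -2 * W - \<beta> * Nv - 2 * (V x - E0) * Yv"
  proof -
    have "(\<Sum>a\<in>UNIV. pd ?F a x * ?v a) = (\<Sum>a\<in>UNIV. (- 2 * (\<Sum>b\<in>UNIV. symL g M x a b * Vup g V x b) - \<beta> * N x a - 2 * (V x - E0) * Y x a) * ?v a)"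
      using cond xU by simp
    also have "\<dots> = -2 * W - \<beta> * Nv - 2 * (V x - E0) * Yv"
      unfolding W_def Nv_def Yv_def
      by (simp add: sum_distrib_left sum_distrib_right sum_subtractf algebra_simps sum.distrib)
    finally show ?thesis .
  qed
  have D: "((\<lambda>s. - \<tau> s * (\<Sum>a\<in>UNIV. \<Sum>b\<in>UNIV. symL g M (q s) a b * q' s $ a * q' s $ b)
        + \<sigma> s * (\<Sum>a\<in>UNIV. M (q s) a * q' s $ a)
        + \<tau> s * ?F (q s)) has_real_derivative
      (- \<sigma> t * S + - (2*(E0 - V x) * Yv - 2*W) * \<tau> t) + (\<sigma>d * Lv + (S - LVu) * \<sigma> t)
      + (\<sigma> t * LVu + (-2 * W - \<beta> * Nv - 2 * (V x - E0) * Yv) * \<tau> t)) (at t)"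
    apply (rule DERIV_cong, rule DERIV_add, rule DERIV_add, rule DERIV_mult, rule DERIV_minus[OF dtau], rule Qd,
       rule DERIV_mult[OF dsig Lind], rule DERIV_mult[OF dtau Fd])
    unfolding Fval[unfolded x_def] by (simp add: S_def W_def Yv_def Lv_def LVu_def x_def algebra_simps)
  show ?thesis
    by (rule DERIV_cong[OF D]) (simp add: algebra_simps Lv_def Nv_def x_def)
qed



lemma tele0: "(\<Sum>k\<in>{0..l}. h k - (if k < l then h (Suc k) else 0)) = (h 0 :: real)"
proof -
  have "(\<Sum>k\<in>{0..l}. h k - (if k < l then h (Suc k) else 0)) = (\<Sum>k\<in>{..<Suc l}. h k - (if k < l then h (Suc k) else 0))"
    by (simp add: atLeast0AtMost lessThan_Suc_atMost)
  also have "\<dots> = (\<Sum>k\<in>{..<l}. h k - h (Suc k)) + h l"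
    by (simp add: sum.lessThan_Suc)
  also have "\<dots> = h 0" by (simp add: sum_lessThan_telescope')
  finally show ?thesis .
qed

lemma I2_ok:
  fixes g :: "real^'n::finite \<Rightarrow> 'n \<Rightarrow> 'n \<Rightarrow> real"
  assumes oU: "open U" and mg: "metric_on U g" and cV: "Cinf_on U V"
    and H1: "\<forall>k\<in>{0..l}. (\<forall>a. Cinf_on U (\<lambda>q. L (2*k) q a))
                    \<and> CKT_on U g (symL g (L (2*k))) (Y (2*k))"
    and H2: "\<forall>q\<in>U. \<forall>a.
          pd (\<lambda>p. \<Sum>b\<in>UNIV. L (2*l) p b * Vup g V p b) a q
          = - 2 * (\<Sum>b\<in>UNIV. symL g (L (2*l)) q a b * Vup g V q b)
            - 2 * (V q - E0) * Y (2*l) q a"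
    and H3: "\<forall>k\<in>{0..<l}. \<forall>q\<in>U. \<forall>a.
          pd (\<lambda>p. \<Sum>b\<in>UNIV. L (2*k) p b * Vup g V p b) a q
          = - 2 * (\<Sum>b\<in>UNIV. symL g (L (2*k)) q a b * Vup g V q b)
            - 2 * (real k + 1) * (2 * real k + 1) * L (2*k+2) q a
            - 2 * (V q - E0) * Y (2*k) q a"
  shows "first_integral U g V E0 (I2 g V l L)"
  unfolding first_integral_def
proof (intro allI impI ballI)
  fix T q q' q'' t
  assume "open T" and cs: "constrained_solution U g V E0 T q q' q''" and tT: "t \<in> T"
  define h where "h = (\<lambda>k. real (2*k) * t ^ (2*k-1) * (\<Sum>a\<in>UNIV. L (2*k) (q t) a * q' t $ a))"
  have blk: "((\<lambda>s. - (s ^ (2*k+1) / real (2*k+1)) * (\<Sum>a\<in>UNIV. \<Sum>b\<in>UNIV. symL g (L (2*k)) (q s) a b * q' s $ a * q' s $ b)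
        + s ^ (2*k) * (\<Sum>a\<in>UNIV. L (2*k) (q s) a * q' s $ a)
        + s ^ (2*k+1) / real (2*k+1) * (\<Sum>a\<in>UNIV. L (2*k) (q s) a * Vup g V (q s) a)) has_real_derivative
        h k - (if k < l then h (Suc k) else 0)) (at t)" if kl: "k \<in> {0..l}" for k
  proof -
    define \<beta> where "\<beta> = (if k < l then 2 * (real k + 1) * (2 * real k + 1) else 0)"
    have Lc: "\<forall>a. Cinf_on U (\<lambda>q. L (2*k) q a)" and ckt: "CKT_on U g (symL g (L (2*k))) (Y (2*k))"
      using H1 kl by blast+
    have cond: "\<forall>q\<in>U. \<forall>a. pd (\<lambda>p. \<Sum>b\<in>UNIV. L (2*k) p b * Vup g V p b) a q
          = - 2 * (\<Sum>b\<in>UNIV. symL g (L (2*k)) q a b * Vup g V q b) - \<beta> * L (2*k+2) q a - 2 * (V q - E0) * Y (2*k) q a"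
    proof (cases "k < l")
      case True then show ?thesis using H3 by (simp add: \<beta>_def)
    next
      case False then have "k = l" using kl by simp
      then show ?thesis using H2 False by (simp add: \<beta>_def)
    qed
    have dtau: "((\<lambda>s. s ^ (2*k+1) / real (2*k+1)) has_real_derivative (\<lambda>s. s ^ (2*k)) t) (at t)"
      by (rule DERIV_cong, rule DERIV_cdivide, rule DERIV_pow) (simp del: of_nat_add add: of_nat_add[symmetric])
    have dsig: "((\<lambda>s. s ^ (2*k)) has_real_derivative real (2*k) * t ^ (2*k - 1)) (at t)"
      by (rule DERIV_cong, rule DERIV_pow) simp
    note B = block_deriv[OF oU mg cV Lc ckt cond cs tT dtau dsig]
    show ?thesis
    proof (rule DERIV_cong[OF B])
      show "real (2*k) * t ^ (2*k - 1) * (\<Sum>a\<in>UNIV. L (2*k) (q t) a * q' t $ a) -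
        t ^ (2*k+1) / real (2*k+1) * \<beta> * (\<Sum>a\<in>UNIV. L (2*k+2) (q t) a * q' t $ a) =
        h k - (if k < l then h (Suc k) else 0)"
      proof (cases "k < l")
        case True
        have e: "2 * Suc k - 1 = 2*k+1" "2 * Suc k = 2*k+2" by simp_all
        show ?thesis using True unfolding h_def \<beta>_def e by (simp add: field_simps)
      next
        case False then show ?thesis unfolding h_def \<beta>_def by simp
      qed
    qed
  qed
  have fun_eq: "(\<lambda>s. I2 g V l L s (q s) (q' s)) = (\<lambda>s. \<Sum>k\<in>{0..l}. - (s ^ (2*k+1) / real (2*k+1)) * (\<Sum>a\<in>UNIV. \<Sum>b\<in>UNIV. symL g (L (2*k)) (q s) a b * q' s $ a * q' s $ b)
        + s ^ (2*k) * (\<Sum>a\<in>UNIV. L (2*k) (q s) a * q' s $ a)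
        + s ^ (2*k+1) / real (2*k+1) * (\<Sum>a\<in>UNIV. L (2*k) (q s) a * Vup g V (q s) a))"
    unfolding I2_def by (simp add: sum_distrib_left mult_ac)
  have "((\<lambda>s. I2 g V l L s (q s) (q' s)) has_real_derivative (\<Sum>k\<in>{0..l}. h k - (if k < l then h (Suc k) else 0))) (at t)"
    unfolding fun_eq by (rule DERIV_sum) (rule blk)
  then show "((\<lambda>s. I2 g V l L s (q s) (q' s)) has_real_derivative 0) (at t)"
    unfolding tele0 by (simp add: h_def)
qed



lemma tele1: "(\<Sum>k\<in>{1..l}. h k - (if k < l then h (Suc k) else 0)) = (if l > 0 then h 1 else (0::real))"
proof (cases l)
  case 0 then show ?thesis by simp
next
  case (Suc m)
  have "(\<Sum>k\<in>{1..l}. h k - (if k < l then h (Suc k) else 0)) = (\<Sum>k\<in>{0..m}. h (Suc k) - (if Suc k < Suc m then h (Suc (Suc k)) else 0))"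
    unfolding Suc One_nat_def sum.atLeast_Suc_atMost_Suc_shift o_def ..
  also have "\<dots> = (\<Sum>k\<in>{0..m}. h (Suc k) - (if k < m then h (Suc (Suc k)) else 0))" by simp
  also have "\<dots> = h 1" using tele0[of "\<lambda>k. h (Suc k)" m] by simp
  finally show ?thesis using Suc by simp
qed

lemma swk3: "(\<Sum>a\<in>A. \<Sum>b\<in>B. \<Sum>k\<in>K. f a b k) = (\<Sum>k\<in>K. \<Sum>a\<in>A. \<Sum>b\<in>B. (f a b k::real))"
proof -
  have "(\<Sum>a\<in>A. \<Sum>b\<in>B. \<Sum>k\<in>K. f a b k) = (\<Sum>a\<in>A. \<Sum>k\<in>K. \<Sum>b\<in>B. f a b k)"
    by (rule sum.cong[OF refl], rule sum.swap)
  also have "\<dots> = (\<Sum>k\<in>K. \<Sum>a\<in>A. \<Sum>b\<in>B. f a b k)" by (rule sum.swap)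
  finally show ?thesis .
qed

lemma I1_rewrite:
  "I1 g V l C0 L G s x v =
     (\<Sum>k\<in>{1..l}. - (s ^ (2*k) / real (2*k)) * (\<Sum>a\<in>UNIV. \<Sum>b\<in>UNIV. symL g (L (2*k-1)) x a b * v $ a * v $ b)
        + s ^ (2*k-1) * (\<Sum>a\<in>UNIV. L (2*k-1) x a * v $ a)
        + s ^ (2*k) / real (2*k) * (\<Sum>a\<in>UNIV. L (2*k-1) x a * Vup g V x a))
     + (\<Sum>a\<in>UNIV. \<Sum>b\<in>UNIV. C0 x a b * v $ a * v $ b) + G x"
proof -
  have p1: "(\<Sum>a\<in>UNIV. \<Sum>b\<in>UNIV.
        (- (\<Sum>k=1..l. s ^ (2*k) / real (2*k) * symL g (L (2*k-1)) x a b) + C0 x a b) * v $ a * v $ b)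
      = (\<Sum>a\<in>UNIV. \<Sum>b\<in>UNIV. C0 x a b * v $ a * v $ b)
        - (\<Sum>a\<in>UNIV. \<Sum>b\<in>UNIV. \<Sum>k=1..l. s ^ (2*k) / real (2*k) * symL g (L (2*k-1)) x a b * v $ a * v $ b)"
    by (simp add: algebra_simps sum_distrib_right sum_distrib_left sum_subtractf sum.distrib)
  have p1': "(\<Sum>a\<in>UNIV. \<Sum>b\<in>UNIV. \<Sum>k=1..l. s ^ (2*k) / real (2*k) * symL g (L (2*k-1)) x a b * v $ a * v $ b)
     = (\<Sum>k=1..l. s ^ (2*k) / real (2*k) * (\<Sum>a\<in>UNIV. \<Sum>b\<in>UNIV. symL g (L (2*k-1)) x a b * v $ a * v $ b))"
    by (subst swk3) (simp add: sum_distrib_left mult_ac)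
  have p2: "(\<Sum>a\<in>UNIV. (\<Sum>k=1..l. s ^ (2*k-1) * L (2*k-1) x a) * v $ a)
     = (\<Sum>k=1..l. s ^ (2*k-1) * (\<Sum>a\<in>UNIV. L (2*k-1) x a * v $ a))"
  proof -
    have "(\<Sum>a\<in>UNIV. (\<Sum>k=1..l. s ^ (2*k-1) * L (2*k-1) x a) * v $ a) = (\<Sum>a\<in>UNIV. \<Sum>k=1..l. s ^ (2*k-1) * L (2*k-1) x a * v $ a)"
      by (simp only: sum_distrib_right)
    also have "\<dots> = (\<Sum>k=1..l. \<Sum>a\<in>UNIV. s ^ (2*k-1) * L (2*k-1) x a * v $ a)"
      by (rule sum.swap)
    also have "\<dots> = (\<Sum>k=1..l. s ^ (2*k-1) * (\<Sum>a\<in>UNIV. L (2*k-1) x a * v $ a))"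
      by (simp add: sum_distrib_left mult_ac)
    finally show ?thesis .
  qed
  show ?thesis unfolding I1_def p1 p1' p2
    by (simp add: sum.distrib sum_subtractf sum_negf algebra_simps)
qed



lemma I1_ok:
  fixes g :: "real^'n::finite \<Rightarrow> 'n \<Rightarrow> 'n \<Rightarrow> real"
  assumes oU: "open U" and mg: "metric_on U g" and cV: "Cinf_on U V"
    and HC: "CKT_on U g C0 X0" and HCs: "\<forall>a b. Cinf_on U (\<lambda>q. C0 q a b)"
    and H1: "\<forall>k\<in>{1..l}. (\<forall>a. Cinf_on U (\<lambda>q. L (2*k-1) q a))
                    \<and> CKT_on U g (symL g (L (2*k-1))) (Y (2*k-1))"
    and H2: "l \<ge> 1 \<longrightarrow> (\<forall>q\<in>U. \<forall>a.
          pd (\<lambda>p. \<Sum>b\<in>UNIV. L (2*l-1) p b * Vup g V p b) a q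
          = - 2 * (\<Sum>b\<in>UNIV. symL g (L (2*l-1)) q a b * Vup g V q b)
            - 2 * (V q - E0) * Y (2*l-1) q a)"
    and H3: "\<forall>k\<in>{1..<l}. \<forall>q\<in>U. \<forall>a.
          pd (\<lambda>p. \<Sum>b\<in>UNIV. L (2*k-1) p b * Vup g V p b) a q
          = - 2 * (\<Sum>b\<in>UNIV. symL g (L (2*k-1)) q a b * Vup g V q b)
            - 2 * real k * (2 * real k + 1) * L (2*k+1) q a
            - 2 * (V q - E0) * Y (2*k-1) q a"
    and HGd: "\<forall>q\<in>U. G differentiable (at q)"
    and HG: "\<forall>q\<in>U. \<forall>a. pd G a q = 2 * (\<Sum>b\<in>UNIV. C0 q a b * Vup g V q b)
            + 2 * (V q - E0) * X0 q a - (if l > 0 then L 1 q a else 0)"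
  shows "first_integral U g V E0 (I1 g V l C0 L G)"
  unfolding first_integral_def
proof (intro allI impI ballI)
  fix T q q' q'' t
  assume "open T" and cs: "constrained_solution U g V E0 T q q' q''" and tT: "t \<in> T"
  note s = sol_at[OF cs tT]
  define x where "x = q t"
  have xU: "x \<in> U" using s(1) x_def by simp
  let ?v = "\<lambda>a. q' t $ a"
  define h where "h = (\<lambda>k. real (2*k-1) * t ^ (2*k-1-1) * (\<Sum>a\<in>UNIV. L (2*k-1) (q t) a * q' t $ a))"
  have blk: "((\<lambda>s. - (s ^ (2*k) / real (2*k)) * (\<Sum>a\<in>UNIV. \<Sum>b\<in>UNIV. symL g (L (2*k-1)) (q s) a b * q' s $ a * q' s $ b)
        + s ^ (2*k-1) * (\<Sum>a\<in>UNIV. L (2*k-1) (q s) a * q' s $ a)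
        + s ^ (2*k) / real (2*k) * (\<Sum>a\<in>UNIV. L (2*k-1) (q s) a * Vup g V (q s) a)) has_real_derivative
        h k - (if k < l then h (Suc k) else 0)) (at t)" if kl: "k \<in> {1..l}" for k
  proof -
    define \<beta> where "\<beta> = (if k < l then 2 * real k * (2 * real k + 1) else 0)"
    have Lc: "\<forall>a. Cinf_on U (\<lambda>q. L (2*k-1) q a)" and ckt: "CKT_on U g (symL g (L (2*k-1))) (Y (2*k-1))"
      using H1 kl by blast+
    have cond: "\<forall>q\<in>U. \<forall>a. pd (\<lambda>p. \<Sum>b\<in>UNIV. L (2*k-1) p b * Vup g V p b) a q
          = - 2 * (\<Sum>b\<in>UNIV. symL g (L (2*k-1)) q a b * Vup g V q b) - \<beta> * L (2*k+1) q a - 2 * (V q - E0) * Y (2*k-1) q a"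
    proof (cases "k < l")
      case True then show ?thesis using H3 kl by (simp add: \<beta>_def)
    next
      case False then have "k = l" using kl by simp
      then show ?thesis using H2 False kl by (simp add: \<beta>_def)
    qed
    have k1: "k \<ge> 1" using kl by simp
    have dtau: "((\<lambda>s. s ^ (2*k) / real (2*k)) has_real_derivative (\<lambda>s. s ^ (2*k-1)) t) (at t)"
      by (rule DERIV_cong, rule DERIV_cdivide, rule DERIV_pow) (use k1 in simp)
    have dsig: "((\<lambda>s. s ^ (2*k-1)) has_real_derivative real (2*k-1) * t ^ (2*k-1-1)) (at t)"
      by (rule DERIV_cong, rule DERIV_pow) simp
    note B = block_deriv[OF oU mg cV Lc ckt cond cs tT dtau dsig]
    show ?thesis
    proof (rule DERIV_cong[OF B])
      show "real (2*k-1) * t ^ (2*k-1-1) * (\<Sum>a\<in>UNIV. L (2*k-1) (q t) a * q' t $ a) -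
        t ^ (2*k) / real (2*k) * \<beta> * (\<Sum>a\<in>UNIV. L (2*k+1) (q t) a * q' t $ a) =
        h k - (if k < l then h (Suc k) else 0)"
      proof (cases "k < l")
        case True
        have e: "2 * Suc k - 1 = 2*k+1" "2 * Suc k - 1 - 1 = 2*k" by simp_all
        have r: "real (2*k+1) = 2 * real k + 1" by simp
        show ?thesis using True k1 unfolding h_def \<beta>_def e r by (simp add: field_simps)
      next
        case False then show ?thesis unfolding h_def \<beta>_def by simp
      qed
    qed
  qed
  have Cd: "\<And>a b. (\<lambda>p. C0 p a b) differentiable (at (q t))"
    using Cinf_diff[OF _ s(1)] HCs by blast
  note Qd = quad_deriv[where q=q and t=t and q'=q' and q''=q'', OF HC Cd s]
  have Gdiff: "G differentiable (at (q t))" using HGd s(1) by blast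
  note Gd = scal_deriv[where q=q and t=t and q'=q', OF Gdiff s(2)]
  define WC where "WC = (\<Sum>a\<in>UNIV. \<Sum>b\<in>UNIV. C0 x a b * ?v a * Vup g V x b)"
  define Xv where "Xv = (\<Sum>a\<in>UNIV. X0 x a * ?v a)"
  define L1v where "L1v = (\<Sum>a\<in>UNIV. L 1 x a * ?v a)"
  have Gval: "(\<Sum>a\<in>UNIV. pd G a x * ?v a) = 2 * WC + 2 * (V x - E0) * Xv - (if l > 0 then L1v else 0)"
  proof -
    have "(\<Sum>a\<in>UNIV. pd G a x * ?v a) = (\<Sum>a\<in>UNIV. (2 * (\<Sum>b\<in>UNIV. C0 x a b * Vup g V x b)
            + 2 * (V x - E0) * X0 x a - (if l > 0 then L 1 x a else 0)) * ?v a)"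
      using HG xU by simp
    also have "\<dots> = 2 * WC + 2 * (V x - E0) * Xv - (if l > 0 then L1v else 0)"
      unfolding WC_def Xv_def L1v_def
      by (simp add: sum_distrib_left sum_distrib_right sum_subtractf algebra_simps sum.distrib)
    finally show ?thesis .
  qed
  have fun_eq: "(\<lambda>s. I1 g V l C0 L G s (q s) (q' s)) = (\<lambda>s.
     (\<Sum>k\<in>{1..l}. - (s ^ (2*k) / real (2*k)) * (\<Sum>a\<in>UNIV. \<Sum>b\<in>UNIV. symL g (L (2*k-1)) (q s) a b * q' s $ a * q' s $ b)
        + s ^ (2*k-1) * (\<Sum>a\<in>UNIV. L (2*k-1) (q s) a * q' s $ a)
        + s ^ (2*k) / real (2*k) * (\<Sum>a\<in>UNIV. L (2*k-1) (q s) a * Vup g V (q s) a))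
     + (\<Sum>a\<in>UNIV. \<Sum>b\<in>UNIV. C0 (q s) a b * q' s $ a * q' s $ b) + G (q s))"
    unfolding I1_rewrite ..
  have D: "((\<lambda>s. I1 g V l C0 L G s (q s) (q' s)) has_real_derivative
     (\<Sum>k\<in>{1..l}. h k - (if k < l then h (Suc k) else 0))
     + (2*(E0 - V (q t)) * (\<Sum>a\<in>UNIV. X0 (q t) a * q' t $ a) - 2*(\<Sum>a\<in>UNIV. \<Sum>b\<in>UNIV. C0 (q t) a b * q' t $ a * Vup g V (q t) b))
     + (\<Sum>a\<in>UNIV. pd G a (q t) * q' t $ a)) (at t)"
    unfolding fun_eq
    by (rule DERIV_add, rule DERIV_add, rule DERIV_sum, rule blk, assumption, rule Qd, rule Gd)
  show "((\<lambda>s. I1 g V l C0 L G s (q s) (q' s)) has_real_derivative 0) (at t)"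
  proof (rule DERIV_cong[OF D])
    have "h 1 = L1v" by (simp add: h_def L1v_def x_def)
    then show "(\<Sum>k\<in>{1..l}. h k - (if k < l then h (Suc k) else 0))
     + (2*(E0 - V (q t)) * (\<Sum>a\<in>UNIV. X0 (q t) a * q' t $ a) - 2*(\<Sum>a\<in>UNIV. \<Sum>b\<in>UNIV. C0 (q t) a b * q' t $ a * Vup g V (q t) b))
     + (\<Sum>a\<in>UNIV. pd G a (q t) * q' t $ a) = 0"
      unfolding tele1 Gval[unfolded x_def] WC_def Xv_def x_def by (simp add: algebra_simps)
  qed
qed


theorem theorem1:
  fixes g :: "real^'n::finite \<Rightarrow> 'n \<Rightarrow> 'n \<Rightarrow> real"
    and V :: "real^'n \<Rightarrow> real" and E0 :: real and U :: "(real^'n) set"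
  assumes "open U" and "metric_on U g" and "Cinf_on U V"
  shows
   "(\<forall>(l::nat) C0 X0 (L :: nat \<Rightarrow> real^'n \<Rightarrow> 'n \<Rightarrow> real) Y G.
       CKT_on U g C0 X0 \<and> (\<forall>a b. Cinf_on U (\<lambda>q. C0 q a b))
     \<and> (\<forall>k\<in>{1..l}. (\<forall>a. Cinf_on U (\<lambda>q. L (2*k-1) q a))
                    \<and> CKT_on U g (symL g (L (2*k-1))) (Y (2*k-1)))
     \<and> (l \<ge> 1 \<longrightarrow> (\<forall>q\<in>U. \<forall>a.
          pd (\<lambda>p. \<Sum>b\<in>UNIV. L (2*l-1) p b * Vup g V p b) a q
          = - 2 * (\<Sum>b\<in>UNIV. symL g (L (2*l-1)) q a b * Vup g V q b)
            - 2 * (V q - E0) * Y (2*l-1) q a))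
     \<and> (\<forall>k\<in>{1..<l}. \<forall>q\<in>U. \<forall>a.
          pd (\<lambda>p. \<Sum>b\<in>UNIV. L (2*k-1) p b * Vup g V p b) a q
          = - 2 * (\<Sum>b\<in>UNIV. symL g (L (2*k-1)) q a b * Vup g V q b)
            - 2 * real k * (2 * real k + 1) * L (2*k+1) q a
            - 2 * (V q - E0) * Y (2*k-1) q a)
     \<and> (\<forall>q\<in>U. G differentiable (at q))
     \<and> (\<forall>q\<in>U. \<forall>a. pd G a q = 2 * (\<Sum>b\<in>UNIV. C0 q a b * Vup g V q b)
            + 2 * (V q - E0) * X0 q a - (if l > 0 then L 1 q a else 0))
     \<longrightarrow> first_integral U g V E0 (I1 g V l C0 L G))
  \<and> (\<forall>(l::nat) (L :: nat \<Rightarrow> real^'n \<Rightarrow> 'n \<Rightarrow> real) Y.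
       (\<forall>k\<in>{0..l}. (\<forall>a. Cinf_on U (\<lambda>q. L (2*k) q a))
                    \<and> CKT_on U g (symL g (L (2*k))) (Y (2*k)))
     \<and> (\<forall>q\<in>U. \<forall>a.
          pd (\<lambda>p. \<Sum>b\<in>UNIV. L (2*l) p b * Vup g V p b) a q
          = - 2 * (\<Sum>b\<in>UNIV. symL g (L (2*l)) q a b * Vup g V q b)
            - 2 * (V q - E0) * Y (2*l) q a)
     \<and> (\<forall>k\<in>{0..<l}. \<forall>q\<in>U. \<forall>a.
          pd (\<lambda>p. \<Sum>b\<in>UNIV. L (2*k) p b * Vup g V p b) a q
          = - 2 * (\<Sum>b\<in>UNIV. symL g (L (2*k)) q a b * Vup g V q b)
            - 2 * (real k + 1) * (2 * real k + 1) * L (2*k+2) q a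
            - 2 * (V q - E0) * Y (2*k) q a)
     \<longrightarrow> first_integral U g V E0 (I2 g V l L))
  \<and> (\<forall>(lam::real) (L :: real^'n \<Rightarrow> 'n \<Rightarrow> real) Y.
       lam \<noteq> 0
     \<and> (\<forall>a. Cinf_on U (\<lambda>q. L q a)) \<and> CKT_on U g (symL g L) Y
     \<and> (\<forall>q\<in>U. \<forall>a.
          pd (\<lambda>p. \<Sum>b\<in>UNIV. L p b * Vup g V p b) a q
          = - 2 * (\<Sum>b\<in>UNIV. symL g L q a b * Vup g V q b)
            - lam ^ 2 * L q a - 2 * (V q - E0) * Y q a)
     \<longrightarrow> first_integral U g V E0 (I3 g V lam L))"
  proof (intro conjI allI impI)
  fix l C0 X0 L Y G
  assume h: "CKT_on U g C0 X0 \<and> (\<forall>a b. Cinf_on U (\<lambda>q. C0 q a b))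
     \<and> (\<forall>k\<in>{1..l}. (\<forall>a. Cinf_on U (\<lambda>q. L (2*k-1) q a))
                    \<and> CKT_on U g (symL g (L (2*k-1))) (Y (2*k-1)))
     \<and> (l \<ge> 1 \<longrightarrow> (\<forall>q\<in>U. \<forall>a.
          pd (\<lambda>p. \<Sum>b\<in>UNIV. L (2*l-1) p b * Vup g V p b) a q
          = - 2 * (\<Sum>b\<in>UNIV. symL g (L (2*l-1)) q a b * Vup g V q b)
            - 2 * (V q - E0) * Y (2*l-1) q a))
     \<and> (\<forall>k\<in>{1..<l}. \<forall>q\<in>U. \<forall>a.
          pd (\<lambda>p. \<Sum>b\<in>UNIV. L (2*k-1) p b * Vup g V p b) a q
          = - 2 * (\<Sum>b\<in>UNIV. symL g (L (2*k-1)) q a b * Vup g V q b)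
            - 2 * real k * (2 * real k + 1) * L (2*k+1) q a
            - 2 * (V q - E0) * Y (2*k-1) q a)
     \<and> (\<forall>q\<in>U. G differentiable (at q))
     \<and> (\<forall>q\<in>U. \<forall>a. pd G a q = 2 * (\<Sum>b\<in>UNIV. C0 q a b * Vup g V q b)
            + 2 * (V q - E0) * X0 q a - (if l > 0 then L 1 q a else 0))"
  then show "first_integral U g V E0 (I1 g V l C0 L G)"
    using h by (elim conjE) (rule I1_ok[OF assms]; assumption)
next
  fix l L Y
  assume h: "(\<forall>k\<in>{0..l}. (\<forall>a. Cinf_on U (\<lambda>q. L (2*k) q a))
                    \<and> CKT_on U g (symL g (L (2*k))) (Y (2*k)))
     \<and> (\<forall>q\<in>U. \<forall>a.
          pd (\<lambda>p. \<Sum>b\<in>UNIV. L (2*l) p b * Vup g V p b) a q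
          = - 2 * (\<Sum>b\<in>UNIV. symL g (L (2*l)) q a b * Vup g V q b)
            - 2 * (V q - E0) * Y (2*l) q a)
     \<and> (\<forall>k\<in>{0..<l}. \<forall>q\<in>U. \<forall>a.
          pd (\<lambda>p. \<Sum>b\<in>UNIV. L (2*k) p b * Vup g V p b) a q
          = - 2 * (\<Sum>b\<in>UNIV. symL g (L (2*k)) q a b * Vup g V q b)
            - 2 * (real k + 1) * (2 * real k + 1) * L (2*k+2) q a
            - 2 * (V q - E0) * Y (2*k) q a)"
  then show "first_integral U g V E0 (I2 g V l L)"
    using h by (elim conjE) (rule I2_ok[OF assms]; assumption)
next
  fix lam L Y
  assume h: "lam \<noteq> 0
     \<and> (\<forall>a. Cinf_on U (\<lambda>q. L q a)) \<and> CKT_on U g (symL g L) Y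
     \<and> (\<forall>q\<in>U. \<forall>a.
          pd (\<lambda>p. \<Sum>b\<in>UNIV. L p b * Vup g V p b) a q
          = - 2 * (\<Sum>b\<in>UNIV. symL g L q a b * Vup g V q b)
            - lam ^ 2 * L q a - 2 * (V q - E0) * Y q a)"
  then show "first_integral U g V E0 (I3 g V lam L)"
    using h by (elim conjE) (rule I3_ok[OF assms]; assumption)
qed

end
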